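(* Let $R$ be a unital associative ring and $n\ge1$. Let ${\cal P}^0_{LR}$ be the group of pairs $(P_1,P_2)$ of $n\times n$ permutation matrices each of which fixes the first standard basis vector, acting on $M_n(R)$ by $(P_1,P_2)(M)=P_1^{-1}MP_2$. Then ${\rm dom}(\Phi)$ and ${\rm dom}(\Psi)$ are invariant under this action, and $\Phi$ and $\Psi$ commute with it: $\Phi(P_1^{-1}AP_2)=P_1^{-1}\Phi(A)P_2$ for $A\in{\rm dom}(\Phi)$ and $\Psi(P_1^{-1}AP_2)=P_1^{-1}\Psi(A)P_2$ for $A\in{\rm dom}(\Psi)$, for all $(P_1,P_2)\in{\cal P}^0_{LR}$.
   Context: $R^*$: units of $R$. $M_n^*(R)$: invertible $n\times n$ matrices; $M_n^\star(R)$: matrices with all entries in $R^*$. $J_1(M)=M^{-1}$ on $M_n^*(R)$; $J_2(M)_{jk}=(M_{kj})^{-1}$ on $M_n^\star(R)$; $J=J_2\circ J_1$, where $g\circ f$ has domain $\{x\in{\rm dom}(f):f(x)\in{\rm dom}(g)\}$. $\widehat M_n(R)$: matrices whose first row and column consist of $1$'s. For $A=\{a_{j,k}\}\in M_n^\star(R)$, $\Lambda^L(A)_{j,k}=a_{1,1}a_{j,1}^{-1}a_{j,k}a_{1,k}^{-1}$. $\Phi(A)=J_2(\Lambda^L(A^{-1}))$ with ${\rm dom}(\Phi)={\rm dom}(J)\cap\widehat M_n(R)\cap M_n^\star(R)$, and $\Psi=J_2\circ\Phi\circ J_2$ with the natural composition domain. *)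

theory Defs
  imports "Jordan_Normal_Form.Matrix" "HOL-Combinatorics.Permutations"
begin

(* Matrices are n x n JNF matrices ('a mat in carrier_mat n n); indices are 0-based,
   so the paper's index 1 is index 0 here. R is an arbitrary unital associative ring. *)

definition is_unit_r :: "'a::ring_1 \<Rightarrow> bool" where
  "is_unit_r x \<longleftrightarrow> (\<exists>y. x * y = 1 \<and> y * x = 1)"

definition uinv :: "'a::ring_1 \<Rightarrow> 'a" where
  "uinv x = (THE y. x * y = 1 \<and> y * x = 1)"

definition inv_mats :: "nat \<Rightarrow> 'a::ring_1 mat set" where
  "inv_mats n = {M \<in> carrier_mat n n. \<exists>N \<in> carrier_mat n n. M * N = 1\<^sub>m n \<and> N * M = 1\<^sub>m n}"

definition mat_inv :: "nat \<Rightarrow> 'a::ring_1 mat \<Rightarrow> 'a mat" where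
  "mat_inv n M = (THE N. N \<in> carrier_mat n n \<and> M * N = 1\<^sub>m n \<and> N * M = 1\<^sub>m n)"

definition unit_mats :: "nat \<Rightarrow> 'a::ring_1 mat set" where
  "unit_mats n = {M \<in> carrier_mat n n. \<forall>j<n. \<forall>k<n. is_unit_r (M $$ (j,k))}"

definition J1 :: "nat \<Rightarrow> 'a::ring_1 mat \<Rightarrow> 'a mat" where
  "J1 n M = mat_inv n M"

definition J2 :: "nat \<Rightarrow> 'a::ring_1 mat \<Rightarrow> 'a mat" where
  "J2 n M = mat n n (\<lambda>(j,k). uinv (M $$ (k,j)))"

definition dom_J :: "nat \<Rightarrow> 'a::ring_1 mat set" where
  "dom_J n = {M \<in> inv_mats n. J1 n M \<in> unit_mats n}"

definition hat_mats :: "nat \<Rightarrow> 'a::ring_1 mat set" where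
  "hat_mats n = {M \<in> carrier_mat n n. (\<forall>k<n. M $$ (0,k) = 1) \<and> (\<forall>j<n. M $$ (j,0) = 1)}"

definition LambdaL :: "nat \<Rightarrow> 'a::ring_1 mat \<Rightarrow> 'a mat" where
  "LambdaL n A = mat n n (\<lambda>(j,k).
      A $$ (0,0) * uinv (A $$ (j,0)) * A $$ (j,k) * uinv (A $$ (0,k)))"

definition dom_Phi :: "nat \<Rightarrow> 'a::ring_1 mat set" where
  "dom_Phi n = dom_J n \<inter> hat_mats n \<inter> unit_mats n"

definition Phi :: "nat \<Rightarrow> 'a::ring_1 mat \<Rightarrow> 'a mat" where
  "Phi n A = J2 n (LambdaL n (mat_inv n A))"

definition dom_Psi :: "nat \<Rightarrow> 'a::ring_1 mat set" where
  "dom_Psi n = {A \<in> unit_mats n. J2 n A \<in> dom_Phi n \<and> Phi n (J2 n A) \<in> unit_mats n}"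

definition Psi :: "nat \<Rightarrow> 'a::ring_1 mat \<Rightarrow> 'a mat" where
  "Psi n A = J2 n (Phi n (J2 n A))"

definition perm_mats :: "nat \<Rightarrow> 'a::ring_1 mat set" where
  "perm_mats n = {P. \<exists>\<sigma>. \<sigma> permutes {..<n} \<and>
       P = mat n n (\<lambda>(j,k). if j = \<sigma> k then 1 else 0)}"

definition P0LR :: "nat \<Rightarrow> ('a::ring_1 mat \<times> 'a mat) set" where
  "P0LR n = {(P1,P2). P1 \<in> perm_mats n \<and> P2 \<in> perm_mats n \<and>
       P1 *\<^sub>v unit_vec n 0 = unit_vec n 0 \<and> P2 *\<^sub>v unit_vec n 0 = unit_vec n 0}"

definition act :: "nat \<Rightarrow> 'a::ring_1 mat \<times> 'a mat \<Rightarrow> 'a mat \<Rightarrow> 'a mat" where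
  "act n P M = mat_inv n (fst P) * M * snd P"

end

theory Submission
  imports Defs
begin

lemma perm_lt: "s permutes {..<n} \<Longrightarrow> j < n \<Longrightarrow> s j < n"
  using permutes_in_image[of s "{..<n}" j] by simp

definition reix :: "nat \<Rightarrow> (nat \<Rightarrow> nat) \<Rightarrow> (nat \<Rightarrow> nat) \<Rightarrow> 'a::ring_1 mat \<Rightarrow> 'a mat" where
  "reix n s t M = mat n n (\<lambda>(j,k). M $$ (s j, t k))"

lemma reix_carrier[simp]: "reix n s t M \<in> carrier_mat n n"
  by (simp add: reix_def)

lemma reix_dim[simp]: "dim_row (reix n s t M) = n" "dim_col (reix n s t M) = n"
  by (simp_all add: reix_def)

lemma reix_idx[simp]: "j < n \<Longrightarrow> k < n \<Longrightarrow> reix n s t M $$ (j,k) = M $$ (s j, t k)"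
  by (simp add: reix_def)

lemma reix_mult:
  assumes t: "t permutes {..<n}" and s: "\<forall>j<n. s j < n" and u: "\<forall>k<n. u k < n"
    and A: "A \<in> carrier_mat n n" and B: "B \<in> carrier_mat n n"
  shows "reix n s t A * reix n t u B = reix n s u (A * B)"
proof (rule eq_matI)
  fix j k assume j: "j < dim_row (reix n s u (A * B))" and k: "k < dim_col (reix n s u (A * B))"
  hence j: "j < n" and k: "k < n" by auto
  have "(reix n s t A * reix n t u B) $$ (j,k) = (\<Sum>i\<in>{0..<n}. A $$ (s j, t i) * B $$ (t i, u k))"
    using j k by (simp add: scalar_prod_def row_def col_def)
  also have "\<dots> = (\<Sum>i\<in>{0..<n}. A $$ (s j, i) * B $$ (i, u k))"
  proof -
    have "bij_betw t {0..<n} {0..<n}" using permutes_imp_bij[OF t] by (simp add: lessThan_atLeast0)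
    from sum.reindex_bij_betw[OF this, of "\<lambda>i. A $$ (s j, i) * B $$ (i, u k)"] show ?thesis by simp
  qed
  also have "\<dots> = reix n s u (A * B) $$ (j,k)"
    using j k s u A B by (simp add: scalar_prod_def row_def col_def)
  finally show "(reix n s t A * reix n t u B) $$ (j,k) = reix n s u (A * B) $$ (j,k)" .
qed auto

lemma reix_id: "M \<in> carrier_mat n n \<Longrightarrow> reix n id id M = M"
  by (intro eq_matI) auto

lemma reix_one: "s permutes {..<n} \<Longrightarrow> reix n s s (1\<^sub>m n) = (1\<^sub>m n :: 'a::ring_1 mat)"
  apply (intro eq_matI)
  apply (auto simp: perm_lt)
  by (metis permutes_inj injD)

lemma inv_unique:
  assumes M: "M \<in> carrier_mat n n" and N: "N \<in> carrier_mat n n" and N': "N' \<in> carrier_mat n n"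
    and "M * N = 1\<^sub>m n" "N * M = 1\<^sub>m n" "M * N' = 1\<^sub>m n" "N' * M = 1\<^sub>m n"
  shows "N = (N' :: 'a::ring_1 mat)"
proof -
  have "N = N * (M * N')" using assms by (simp add: right_mult_one_mat)
  also have "\<dots> = (N * M) * N'" using assoc_mult_mat[OF N M N'] by simp
  also have "\<dots> = N'" using assms by (simp add: left_mult_one_mat)
  finally show ?thesis .
qed

lemma mat_inv_eq:
  assumes M: "M \<in> carrier_mat n n" and N: "N \<in> carrier_mat n n"
    and "M * N = 1\<^sub>m n" "N * M = 1\<^sub>m n"
  shows "mat_inv n M = (N :: 'a::ring_1 mat)"
  unfolding mat_inv_def
  apply (rule the_equality)
  using assms inv_unique[OF M] by blast+

lemma mat_inv_props:
  assumes "M \<in> inv_mats n"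
  shows "mat_inv n M \<in> carrier_mat n n \<and> M * mat_inv n M = 1\<^sub>m n \<and> mat_inv n M * M = (1\<^sub>m n :: 'a::ring_1 mat)"
proof -
  from assms obtain N where M: "M \<in> carrier_mat n n" and N: "N \<in> carrier_mat n n"
    and "M * N = 1\<^sub>m n" "N * M = 1\<^sub>m n" unfolding inv_mats_def by blast
  moreover have "mat_inv n M = N" using mat_inv_eq[OF M N] calculation by blast
  ultimately show ?thesis by simp
qed

context
  fixes n :: nat and s t :: "nat \<Rightarrow> nat"
  assumes s: "s permutes {..<n}" and t: "t permutes {..<n}"
begin

lemma sr: "\<forall>j<n. s j < n"
  using s by (auto simp: perm_lt)
lemma tr: "\<forall>j<n. t j < n"
  using t by (auto simp: perm_lt)

lemma reix_inv_mats:
  assumes "M \<in> inv_mats n"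
  shows "reix n s t M \<in> inv_mats n \<and> mat_inv n (reix n s t M) = reix n t s (mat_inv n M :: 'a::ring_1 mat)"
proof -
  have M: "M \<in> carrier_mat n n" using assms by (simp add: inv_mats_def)
  note P = mat_inv_props[OF assms]
  have 1: "reix n s t M * reix n t s (mat_inv n M) = 1\<^sub>m n"
    using reix_mult[OF t sr sr M] P reix_one[OF s] by simp
  have 2: "reix n t s (mat_inv n M) * reix n s t M = 1\<^sub>m n"
    using reix_mult[OF s tr tr _ M, of "mat_inv n M"] P reix_one[OF t] by simp
  show ?thesis using 1 2 mat_inv_eq[OF reix_carrier reix_carrier 1 2] unfolding inv_mats_def
    by auto
qed

lemma reix_J2: "M \<in> carrier_mat n n \<Longrightarrow> J2 n (reix n s t M) = reix n t s (J2 n (M :: 'a::ring_1 mat))"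
  by (intro eq_matI) (auto simp: J2_def sr tr)

lemma reix_unit: "M \<in> unit_mats n \<Longrightarrow> reix n s t (M :: 'a::ring_1 mat) \<in> unit_mats n"
  by (auto simp: unit_mats_def sr tr)

context
  assumes s0: "s 0 = 0" and t0: "t 0 = 0"
begin

lemma reix_hat: "M \<in> hat_mats n \<Longrightarrow> reix n s t (M :: 'a::ring_1 mat) \<in> hat_mats n"
  by (auto simp: hat_mats_def sr tr s0 t0)

lemma reix_Lambda: "n \<ge> 1 \<Longrightarrow> M \<in> carrier_mat n n \<Longrightarrow> LambdaL n (reix n s t M) = reix n s t (LambdaL n (M :: 'a::ring_1 mat))"
  by (intro eq_matI) (auto simp: LambdaL_def sr tr s0 t0)

end
end

lemma J2_carrier[simp]: "J2 n M \<in> carrier_mat n n"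
  by (simp add: J2_def)

lemma Lambda_carrier[simp]: "LambdaL n M \<in> carrier_mat n n"
  by (simp add: LambdaL_def)

lemma Phi_carrier[simp]: "Phi n M \<in> carrier_mat n n"
  by (simp add: Phi_def)

lemma perm_mat_reix:
  assumes "P \<in> perm_mats n"
  obtains \<sigma> where "\<sigma> permutes {..<n}" "P = reix n id \<sigma> (1\<^sub>m n :: 'a::ring_1 mat)"
proof -
  from assms obtain \<sigma> where sg: "\<sigma> permutes {..<n}" and P: "P = mat n n (\<lambda>(j,k). if j = \<sigma> k then (1::'a) else 0)"
    unfolding perm_mats_def by blast
  have "P = reix n id \<sigma> (1\<^sub>m n)" unfolding P
    by (intro eq_matI) (auto simp: perm_lt[OF sg] sg)
  with sg that show ?thesis by blast
qed

lemma fix0: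
  assumes "n \<ge> 1" "\<sigma> permutes {..<n}"
    and "reix n id \<sigma> (1\<^sub>m n) *\<^sub>v unit_vec n 0 = (unit_vec n 0 :: 'a::ring_1 vec)"
  shows "\<sigma> 0 = 0"
proof (rule ccontr)
  assume ne: "\<sigma> 0 \<noteq> 0"
  have sn: "\<sigma> 0 < n" using assms perm_lt by fastforce
  have "(reix n id \<sigma> (1\<^sub>m n) *\<^sub>v unit_vec n 0) $ (\<sigma> 0) = (unit_vec n 0 :: 'a vec) $ (\<sigma> 0)"
    using assms(3) by simp
  moreover have "(reix n id \<sigma> (1\<^sub>m n) *\<^sub>v unit_vec n 0) $ (\<sigma> 0) = (1::'a)"
    using sn assms(1) by (simp add: perm_lt[OF assms(2)])
  moreover have "(unit_vec n 0 :: 'a vec) $ (\<sigma> 0) = 0" using sn ne by simp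
  ultimately show False by simp
qed

lemma act_reix:
  assumes s: "s permutes {..<n}" and t: "t permutes {..<n}" and M: "M \<in> carrier_mat n n"
  shows "act n (reix n id s (1\<^sub>m n), reix n id t (1\<^sub>m n)) M = reix n s t (M :: 'a::ring_1 mat)"
proof -
  have sr: "\<forall>j<n. s j < n" "\<forall>j<n. t j < n" using s t by (auto simp: perm_lt)
  have idp: "id permutes {..<n}" by (simp add: permutes_id)
  have a: "reix n id s (1\<^sub>m n) * reix n s id (1\<^sub>m n) = (1\<^sub>m n :: 'a mat)"
    using reix_mult[where 'a='a, OF s, of id id "1\<^sub>m n" "1\<^sub>m n"] reix_one[where 'a='a, OF idp] by simp
  have b: "reix n s id (1\<^sub>m n) * reix n id s (1\<^sub>m n) = (1\<^sub>m n :: 'a mat)"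
    using reix_mult[where 'a='a, OF idp sr(1) sr(1), of "1\<^sub>m n" "1\<^sub>m n"] reix_one[where 'a='a, OF s] by simp
  have inv: "mat_inv n (reix n id s (1\<^sub>m n)) = reix n s id (1\<^sub>m n :: 'a mat)"
    by (rule mat_inv_eq[OF reix_carrier reix_carrier a b])
  have "reix n s id (1\<^sub>m n) * M = reix n s id (1\<^sub>m n * M)"
    using reix_mult[OF idp sr(1), of id "1\<^sub>m n" M] M reix_id[OF M] by simp
  also have "\<dots> = reix n s id M" using M by simp
  finally have c: "reix n s id (1\<^sub>m n) * M = reix n s id M" .
  have "reix n s id M * reix n id t (1\<^sub>m n) = reix n s t (M * 1\<^sub>m n)"
    using reix_mult[OF idp sr(1) sr(2) M] by simp
  thus ?thesis unfolding act_def using inv c M by simp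
qed

theorem lemma4:
  fixes n :: nat and P1 P2 :: "'a::ring_1 mat"
  assumes "n \<ge> 1" and "(P1, P2) \<in> P0LR n"
  shows "(\<forall>A \<in> dom_Phi n. act n (P1,P2) A \<in> dom_Phi n \<and>
            Phi n (act n (P1,P2) A) = act n (P1,P2) (Phi n A)) \<and>
         (\<forall>A \<in> dom_Psi n. act n (P1,P2) A \<in> dom_Psi n \<and>
            Psi n (act n (P1,P2) A) = act n (P1,P2) (Psi n A))"
proof -
  from assms(2) have P1: "P1 \<in> perm_mats n" and P2: "P2 \<in> perm_mats n"
    and f1: "P1 *\<^sub>v unit_vec n 0 = unit_vec n 0" and f2: "P2 *\<^sub>v unit_vec n 0 = unit_vec n 0"
    unfolding P0LR_def by auto
  obtain s where s: "s permutes {..<n}" and P1e: "P1 = reix n id s (1\<^sub>m n)" using perm_mat_reix[OF P1] by blast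
  obtain t where t: "t permutes {..<n}" and P2e: "P2 = reix n id t (1\<^sub>m n)" using perm_mat_reix[OF P2] by blast
  have s0: "s 0 = 0" using fix0[OF assms(1) s] f1 P1e by simp
  have t0: "t 0 = 0" using fix0[OF assms(1) t] f2 P2e by simp
  have act: "\<And>M. M \<in> carrier_mat n n \<Longrightarrow> act n (P1,P2) M = reix n s t M"
    using act_reix[OF s t] P1e P2e by simp
  have PhiR: "A \<in> dom_Phi n \<Longrightarrow> reix n s t A \<in> dom_Phi n \<and> Phi n (reix n s t A) = reix n s t (Phi n A)"
    if st: "s permutes {..<n}" "t permutes {..<n}" "s 0 = 0" "t 0 = 0" for s t and A :: "'a mat"
  proof -
    assume A: "A \<in> dom_Phi n"
    hence Ai: "A \<in> inv_mats n" and AJ: "mat_inv n A \<in> unit_mats n" and Ah: "A \<in> hat_mats n"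
      and Au: "A \<in> unit_mats n"
      by (auto simp: dom_Phi_def dom_J_def J1_def)
    note R = reix_inv_mats[OF st(1,2) Ai]
    have Ic: "mat_inv n A \<in> carrier_mat n n" using mat_inv_props[OF Ai] by blast
    have "reix n s t A \<in> dom_Phi n"
      using R reix_unit[OF st(2,1) AJ] reix_hat[OF st] Ah reix_unit[OF st(1,2) Au]
      by (auto simp: dom_Phi_def dom_J_def J1_def)
    moreover have "Phi n (reix n s t A) = reix n s t (Phi n A)"
      unfolding Phi_def using R reix_Lambda[OF st(2,1,4,3) assms(1) Ic] reix_J2[OF st(2,1) Lambda_carrier] Ic
      by simp
    ultimately show ?thesis by blast
  qed
  show ?thesis
  proof (intro conjI ballI)
    fix A :: "'a mat" assume A: "A \<in> dom_Phi n"
    hence Ac: "A \<in> carrier_mat n n" by (simp add: dom_Phi_def hat_mats_def)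
    show "act n (P1,P2) A \<in> dom_Phi n" "Phi n (act n (P1,P2) A) = act n (P1,P2) (Phi n A)"
      using PhiR[OF s t s0 t0 A] act[OF Ac] act[OF Phi_carrier] by auto
  next
    fix A :: "'a mat" assume A: "A \<in> dom_Psi n"
    hence Au: "A \<in> unit_mats n" and AP: "J2 n A \<in> dom_Phi n" and AU: "Phi n (J2 n A) \<in> unit_mats n"
      by (auto simp: dom_Psi_def)
    have Ac: "A \<in> carrier_mat n n" using Au by (simp add: unit_mats_def)
    have J: "J2 n (reix n s t A) = reix n t s (J2 n A)" using reix_J2[OF s t Ac] .
    note Q = PhiR[OF t s t0 s0 AP]
    have "reix n s t A \<in> dom_Psi n"
      unfolding dom_Psi_def using reix_unit[OF s t Au] J Q reix_unit[OF t s AU] by auto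
    moreover have "Psi n (reix n s t A) = reix n s t (Psi n A)"
      unfolding Psi_def using J Q reix_J2[OF t s Phi_carrier] by simp
    ultimately show "act n (P1,P2) A \<in> dom_Psi n" "Psi n (act n (P1,P2) A) = act n (P1,P2) (Psi n A)"
      using act[OF Ac] act[OF J2_carrier] unfolding Psi_def by auto
  qed
qed

end
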